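(* Define $\mathrm{Mex}(F)=\min(\mathbb{N}_0\setminus F)$ for $F\subseteq\mathbb{N}_0$, and $a+D=\{a+d:d\in D\}$. Define triples $v(n)=(v_1(n),v_2(n),v_3(n))$, $n\ge 0$, recursively by $v(0)=(0,0,0)$ and, for $n\ge 0$, with $F_n=\{v_i(k): 0\le k\le n,\ i\in\{1,2,3\}\}$ and $D_n=\bigcup_{k=0}^{n}\{v_2(k)-v_1(k),\,v_3(k)-v_2(k),\,v_3(k)-v_1(k)\}$, \[ v_1(n+1)=\mathrm{Mex}(F_n),\quad v_2(n+1)=\mathrm{Mex}\big((v_1(n+1)+D_n)\cup\{1,\dots,v_1(n+1)\}\cup F_n\big), \] \[ v_3(n+1)=\mathrm{Mex}\big((v_2(n+1)+D_n)\cup\{1,\dots,v_2(n+1)\}\cup F_n\big). \] Then for all $i,j\in\{1,2,3\}$ with $i>j$ and all $n\ge 0$, \[ v_i(n+1)-v_j(n+1)-\big(v_i(n)-v_j(n)\big)\ge i-j. \]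
   Context: $\mathbb{N}_0$ denotes the nonnegative integers. *)

theory Defs
  imports Main
begin

definition Mex :: "int set \<Rightarrow> int" where
  "Mex F = int (LEAST x::nat. int x \<notin> F)"

definition shift :: "int \<Rightarrow> int set \<Rightarrow> int set" where
  "shift a D = {a + d | d. d \<in> D}"

text \<open>F_n and D_n computed from the list of triples v(0),...,v(n).\<close>
definition Fset :: "(int \<times> int \<times> int) list \<Rightarrow> int set" where
  "Fset xs = (\<Union>(a,b,c)\<in>set xs. {a, b, c})"

definition Dset :: "(int \<times> int \<times> int) list \<Rightarrow> int set" where
  "Dset xs = (\<Union>(a,b,c)\<in>set xs. {b - a, c - b, c - a})"

definition step :: "(int \<times> int \<times> int) list \<Rightarrow> int \<times> int \<times> int" where
  "step xs = (let F = Fset xs; D = Dset xs;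
                  a = Mex F;
                  b = Mex (shift a D \<union> {1..a} \<union> F);
                  c = Mex (shift b D \<union> {1..b} \<union> F)
              in (a, b, c))"

text \<open>vs n = [v(0), ..., v(n)]\<close>
fun vs :: "nat \<Rightarrow> (int \<times> int \<times> int) list" where
  "vs 0 = [(0, 0, 0)]"
| "vs (Suc n) = vs n @ [step (vs n)]"

definition v :: "nat \<Rightarrow> int \<times> int \<times> int" where
  "v n = vs n ! n"

definition vc :: "nat \<Rightarrow> nat \<Rightarrow> int" where
  "vc i n = (if i = 1 then fst (v n) else if i = 2 then fst (snd (v n)) else snd (snd (v n)))"

end

theory Submission
  imports Defs
begin

definition A :: "nat \<Rightarrow> int" where "A n = fst (v n)"
definition B :: "nat \<Rightarrow> int" where "B n = fst (snd (v n))"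
definition C :: "nat \<Rightarrow> int" where "C n = snd (snd (v n))"

definition FF :: "nat \<Rightarrow> int set" where
  "FF n = (\<Union>k\<in>{..n}. {A k, B k, C k})"
definition DD :: "nat \<Rightarrow> int set" where
  "DD n = (\<Union>k\<in>{..n}. {B k - A k, C k - B k, C k - A k})"

lemma length_vs: "length (vs n) = Suc n"
  by (induction n) auto

lemma vs_nth: "k \<le> n \<Longrightarrow> vs n ! k = v k"
proof (induction n)
  case 0 then show ?case by (simp add: v_def)
next
  case (Suc n)
  show ?case
  proof (cases "k = Suc n")
    case True then show ?thesis by (simp add: v_def)
  next
    case False
    then have "k \<le> n" using Suc.prems by simp
    then show ?thesis using Suc.IH length_vs[of n] by (simp add: nth_append)
  qed
qed

lemma set_vs: "set (vs n) = v ` {..n}"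
proof -
  have "set (vs n) = {vs n ! i | i. i < length (vs n)}" by (simp add: set_conv_nth)
  also have "\<dots> = v ` {..n}"
  proof (intro set_eqI iffI)
    fix x assume "x \<in> {vs n ! i | i. i < length (vs n)}"
    then obtain i where "i \<le> n" "x = vs n ! i" using length_vs[of n] less_Suc_eq_le by auto
    then show "x \<in> v ` {..n}" using vs_nth by auto
  next
    fix x assume "x \<in> v ` {..n}"
    then obtain i where "i \<le> n" "x = v i" by auto
    then have "x = vs n ! i \<and> i < length (vs n)" using vs_nth length_vs[of n] by auto
    then show "x \<in> {vs n ! i | i. i < length (vs n)}" by blast
  qed
  finally show ?thesis .
qed

lemma v_Suc: "v (Suc n) = step (vs n)"
  using length_vs[of n] by (simp add: v_def nth_append)

lemma Fset_vs: "Fset (vs n) = FF n"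
  unfolding Fset_def FF_def set_vs A_def B_def C_def
  by (auto split: prod.splits)

lemma Dset_vs: "Dset (vs n) = DD n"
  unfolding Dset_def DD_def set_vs A_def B_def C_def
  by (auto split: prod.splits)

lemma ABC_Suc:
  "A (Suc n) = Mex (FF n)"
  "B (Suc n) = Mex (shift (A (Suc n)) (DD n) \<union> {1..A (Suc n)} \<union> FF n)"
  "C (Suc n) = Mex (shift (B (Suc n)) (DD n) \<union> {1..B (Suc n)} \<union> FF n)"
  by (simp_all add: A_def B_def C_def v_Suc step_def Let_def Fset_vs Dset_vs)

lemma ABC_0: "A 0 = 0" "B 0 = 0" "C 0 = 0"
  by (simp_all add: A_def B_def C_def v_def)

lemma FF_mem: "x \<in> FF n \<longleftrightarrow> (\<exists>k\<le>n. x = A k \<or> x = B k \<or> x = C k)"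
  unfolding FF_def by auto

lemma DD_mem: "x \<in> DD n \<longleftrightarrow> (\<exists>k\<le>n. x = B k - A k \<or> x = C k - B k \<or> x = C k - A k)"
  unfolding DD_def by auto

lemma finite_FF: "finite (FF n)" unfolding FF_def by auto
lemma finite_DD: "finite (DD n)" unfolding DD_def by auto

lemma FF_mono: "m \<le> n \<Longrightarrow> FF m \<subseteq> FF n" unfolding FF_def by (intro UN_mono) auto
lemma DD_mono: "m \<le> n \<Longrightarrow> DD m \<subseteq> DD n" unfolding DD_def by (intro UN_mono) auto

lemma DD_Suc: "DD (Suc n) = DD n \<union> {B (Suc n) - A (Suc n), C (Suc n) - B (Suc n), C (Suc n) - A (Suc n)}"
  unfolding DD_def by (auto simp: atMost_Suc)

lemma mex_eq:
  assumes "0 \<le> x" "x \<notin> S" "\<And>y. 0 \<le> y \<Longrightarrow> y < x \<Longrightarrow> y \<in> S"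
  shows "Mex S = x"
proof -
  have "(LEAST t::nat. int t \<notin> S) = nat x"
  proof (rule Least_equality)
    show "int (nat x) \<notin> S" using assms by simp
  next
    fix t :: nat assume "int t \<notin> S"
    then show "nat x \<le> t" using assms(3)[of "int t"] by linarith
  qed
  then show ?thesis unfolding Mex_def using assms by simp
qed

lemma mex_le: "0 \<le> x \<Longrightarrow> x \<notin> S \<Longrightarrow> Mex S \<le> x"
  unfolding Mex_def
  using Least_le[of "\<lambda>t. int t \<notin> S" "nat x"] by simp

lemma mex_props:
  assumes "finite S"
  shows "0 \<le> Mex S" "Mex S \<notin> S" "\<And>y. 0 \<le> y \<Longrightarrow> y < Mex S \<Longrightarrow> y \<in> S"
proof -
  have fin: "finite (int -` S)" using assms by (rule finite_vimageI) (simp add: inj_on_def)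
  obtain t :: nat where "t \<notin> int -` S" using ex_new_if_finite[OF infinite_UNIV_nat fin] by blast
  then have ex: "\<exists>t::nat. int t \<notin> S" by blast
  show "0 \<le> Mex S" unfolding Mex_def by simp
  show "Mex S \<notin> S" unfolding Mex_def using LeastI_ex[OF ex] by simp
  fix y :: int assume "0 \<le> y" "y < Mex S"
  then have "nat y < (LEAST t::nat. int t \<notin> S)" unfolding Mex_def by linarith
  from not_less_Least[OF this] show "y \<in> S" using \<open>0 \<le> y\<close> by simp
qed

lemma mex_gt: "finite S \<Longrightarrow> 0 \<le> x \<Longrightarrow> (\<And>y. 0 \<le> y \<Longrightarrow> y \<le> x \<Longrightarrow> y \<in> S) \<Longrightarrow> x < Mex S"
  using mex_props[of S] by force

lemma mex_mono: "S \<subseteq> T \<Longrightarrow> finite T \<Longrightarrow> Mex S \<le> Mex T"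
  using mex_props[of T] mex_le[of "Mex T" S] by auto

lemma A_lt: "A n < Mex (FF n)"
proof (cases n)
  case 0
  have "Mex (FF 0) = 1" by (rule mex_eq) (auto simp: FF_def ABC_0)
  then show ?thesis using 0 by (simp add: ABC_0)
next
  case (Suc p)
  have "A n \<le> Mex (FF n)" using Suc ABC_Suc(1)[of p] mex_mono[OF FF_mono[of p n] finite_FF] by simp
  moreover have "A n \<in> FF n" by (auto simp: FF_mem)
  ultimately show ?thesis using mex_props(2)[OF finite_FF, of n] by (metis order_le_less)
qed

definition Inv0 :: "nat \<Rightarrow> bool" where
  "Inv0 n \<longleftrightarrow> (\<forall>k\<le>n. 0 \<le> A k \<and> A k \<le> B k \<and> B k \<le> C k \<and>
      B k - A k < Mex (DD n) \<and> C k - B k < Mex (DD n)) \<and>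
    (\<forall>k l. k < l \<and> l \<le> n \<longrightarrow> A k < A l \<and> B k < B l \<and> C k + 3 \<le> C l \<and>
      B k - A k < B l - A l \<and> C k - B k < C l - B l)"

lemma Inv0_0: "Inv0 0"
proof -
  have "Mex (DD 0) = 1" by (rule mex_eq) (auto simp: DD_def ABC_0)
  then show ?thesis unfolding Inv0_def by (auto simp: ABC_0)
qed


lemma Inv0_Suc:
  assumes inv: "Inv0 n"
  shows "Inv0 (Suc n)"
proof -
  define a where "a = Mex (FF n)"
  define m where "m = Mex (DD n)"
  have P1: "\<And>k. k \<le> n \<Longrightarrow> 0 \<le> A k \<and> A k \<le> B k \<and> B k \<le> C k \<and> B k - A k < m \<and> C k - B k < m"
    using inv unfolding Inv0_def m_def by blast
  have P2: "\<And>k l. k < l \<Longrightarrow> l \<le> n \<Longrightarrow> A k < A l \<and> B k < B l \<and> C k + 3 \<le> C l \<and>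
      B k - A k < B l - A l \<and> C k - B k < C l - B l"
    using inv unfolding Inv0_def by blast
  have P2': "\<And>k. k \<le> n \<Longrightarrow> A k \<le> A n \<and> B k \<le> B n \<and> C k \<le> C n \<and>
      B k - A k \<le> B n - A n \<and> C k - B k \<le> C n - B n"
  proof -
    fix k assume "k \<le> n"
    then consider "k = n" | "k < n" by linarith
    then show "A k \<le> A n \<and> B k \<le> B n \<and> C k \<le> C n \<and> B k - A k \<le> B n - A n \<and> C k - B k \<le> C n - B n"
    proof cases
      case 2 then show ?thesis using P2[of k n] by auto
    qed simp
  qed
  have d31: "C k - A k + 2 \<le> C l - A l" if "k < l" "l \<le> n" for k l
    using P2[OF that] by linarith
  have Cdist: "\<And>k l. k \<le> n \<Longrightarrow> l \<le> n \<Longrightarrow> k \<noteq> l \<Longrightarrow> \<bar>C k - C l\<bar> \<ge> 3"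
  proof -
    fix k l assume "k \<le> n" "l \<le> n" "k \<noteq> l"
    then consider "k < l" | "l < k" by linarith
    then show "\<bar>C k - C l\<bar> \<ge> 3" using P2[of k l] P2[of l k] \<open>k \<le> n\<close> \<open>l \<le> n\<close> by cases auto
  qed
  have Ddist: "\<And>k l. k \<le> n \<Longrightarrow> l \<le> n \<Longrightarrow> k \<noteq> l \<Longrightarrow> \<bar>(C k - A k) - (C l - A l)\<bar> \<ge> 2"
  proof -
    fix k l assume "k \<le> n" "l \<le> n" "k \<noteq> l"
    then consider "k < l" | "l < k" by linarith
    then show "\<bar>(C k - A k) - (C l - A l)\<bar> \<ge> 2" using d31[of k l] d31[of l k] \<open>k \<le> n\<close> \<open>l \<le> n\<close> by cases auto
  qed
  have F0: "0 \<in> FF n" using ABC_0 by (auto simp: FF_mem)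
  have D0: "0 \<in> DD n" using ABC_0 by (auto simp: DD_mem)
  have a_nin: "a \<notin> FF n" and a_ge: "0 \<le> a" and a_below: "\<And>y. 0 \<le> y \<Longrightarrow> y < a \<Longrightarrow> y \<in> FF n"
    using mex_props[OF finite_FF[of n]] unfolding a_def by auto
  have a_gt: "A n < a" using A_lt unfolding a_def .
  have m_nin: "m \<notin> DD n" and m_ge: "0 \<le> m" and m_below: "\<And>y. 0 \<le> y \<Longrightarrow> y < m \<Longrightarrow> y \<in> DD n"
    using mex_props[OF finite_DD[of n]] unfolding m_def by auto
  have m1: "1 \<le> m" using m_nin D0 m_ge by (cases "m = 0") auto
  have Fbig: "\<exists>k\<le>n. x = C k" if xin: "x \<in> FF n" and xgt: "x > B n" for x
  proof -
    obtain k where k: "k \<le> n" "x = A k \<or> x = B k \<or> x = C k" using xin unfolding FF_mem by blast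
    have "A k \<le> B k" "B k \<le> B n" using P1[OF k(1)] P2'[OF k(1)] by auto
    then have "x = C k" using k(2) xgt by auto
    then show ?thesis using k(1) by blast
  qed
  have Fmax: "x \<le> C n" if xin: "x \<in> FF n" for x
  proof -
    obtain k where k: "k \<le> n" "x = A k \<or> x = B k \<or> x = C k" using xin unfolding FF_mem by blast
    have "A k \<le> B k" "B k \<le> C k" "C k \<le> C n" using P1[OF k(1)] P2'[OF k(1)] by auto
    then show ?thesis using k(2) by auto
  qed
  have Dbig: "\<exists>k\<le>n. x = C k - A k" if xin: "x \<in> DD n" and xgt: "x \<ge> m" for x
  proof -
    obtain k where k: "k \<le> n" "x = B k - A k \<or> x = C k - B k \<or> x = C k - A k" using xin unfolding DD_mem by blast
    have "B k - A k < m" "C k - B k < m" using P1[OF k(1)] by auto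
    then have "x = C k - A k" using k(2) xgt by auto
    then show ?thesis using k(1) by blast
  qed
  have amB: "B n + 2 \<le> a + m" using a_gt P1[of n] by simp
  obtain e where e_range: "m \<le> e" "e \<le> m + 2" and e_nin: "e \<notin> DD n" and ae_nin: "a + e \<notin> FF n"
    and e_mid: "\<And>x. m < x \<Longrightarrow> x < e \<Longrightarrow> x \<in> DD n" and e_m: "e \<noteq> m \<Longrightarrow> a + m \<in> FF n"
  proof (cases "a + m \<in> FF n")
    case False
    then show ?thesis using that[of m] m_nin by auto
  next
    case True
    then obtain k where k: "k \<le> n" "a + m = C k" using Fbig amB by force
    show ?thesis
    proof (cases "m + 1 \<in> DD n")
      case False
      have "a + (m + 1) \<notin> FF n"
      proof
        assume h: "a + (m + 1) \<in> FF n"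
        then obtain l where "l \<le> n" "a + (m + 1) = C l" using Fbig amB by force
        then show False using Cdist[of k l] k by (cases "k = l") auto
      qed
      then show ?thesis using that[of "m+1"] False True by auto
    next
      case True2: True
      have m2: "m + 2 \<notin> DD n"
      proof
        assume "m + 2 \<in> DD n"
        then obtain l where l: "l \<le> n" "m + 2 = C l - A l" using Dbig by force
        obtain k' where k': "k' \<le> n" "m + 1 = C k' - A k'" using Dbig True2 by force
        show False using Ddist[of k' l] l k' by (cases "k' = l") auto
      qed
      have "a + (m + 2) \<notin> FF n"
      proof
        assume h: "a + (m + 2) \<in> FF n"
        then obtain l where "l \<le> n" "a + (m + 2) = C l" using Fbig amB by force
        then show False using Cdist[of k l] k by (cases "k = l") auto
      qed
      moreover have "\<And>x. m < x \<Longrightarrow> x < m + 2 \<Longrightarrow> x \<in> DD n"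
      proof -
        fix x assume "m < x" "x < m + 2"
        then have "x = m + 1" by simp
        then show "x \<in> DD n" using True2 by simp
      qed
      ultimately show ?thesis using that[of "m+2"] m2 True by simp
    qed
  qed
  have As: "A (Suc n) = a" using ABC_Suc(1) a_def by simp
  have Bs: "B (Suc n) = a + e"
  proof -
    have "Mex (shift a (DD n) \<union> {1..a} \<union> FF n) = a + e"
    proof (rule mex_eq)
      show "0 \<le> a + e" using a_ge e_range m_ge by simp
      show "a + e \<notin> shift a (DD n) \<union> {1..a} \<union> FF n"
        using e_nin ae_nin e_range m1 by (auto simp: shift_def)
      fix y assume y: "0 \<le> y" "y < a + e"
      show "y \<in> shift a (DD n) \<union> {1..a} \<union> FF n"
      proof (cases "y \<le> a")
        case True
        then show ?thesis using F0 y by (cases "y = 0") auto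
      next
        case False
        have "y - a \<in> DD n \<or> y = a + m"
          using m_below[of "y - a"] e_mid[of "y - a"] False y by (cases "y - a < m"; cases "y - a = m") auto
        then show ?thesis
        proof
          assume "y - a \<in> DD n"
          then have "y \<in> shift a (DD n)" unfolding shift_def by force
          then show ?thesis by simp
        next
          assume "y = a + m"
          then show ?thesis using e_m y by (cases "e = m") auto
        qed
      qed
    qed
    then show ?thesis using ABC_Suc(2)[of n] As by simp
  qed
  have bB: "B n + 2 \<le> a + e" using amB e_range by simp
  have Cs: "C (Suc n) = a + e + m"
  proof -
    have "Mex (shift (a + e) (DD n) \<union> {1..a + e} \<union> FF n) = a + e + m"
    proof (rule mex_eq)
      show "0 \<le> a + e + m" using a_ge e_range m_ge by simp
      have "C n < a + e + m" using bB P1[of n] by simp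
      then show "a + e + m \<notin> shift (a + e) (DD n) \<union> {1..a + e} \<union> FF n"
        using m_nin m1 Fmax by (force simp: shift_def)
      fix y assume y: "0 \<le> y" "y < a + e + m"
      show "y \<in> shift (a + e) (DD n) \<union> {1..a + e} \<union> FF n"
      proof (cases "y \<le> a + e")
        case True
        then show ?thesis using F0 y by (cases "y = 0") auto
      next
        case False
        then have "y - (a + e) \<in> DD n" using m_below y by simp
        then have "y \<in> shift (a + e) (DD n)" unfolding shift_def by force
        then show ?thesis by simp
      qed
    qed
    then show ?thesis using ABC_Suc(3)[of n] Bs by simp
  qed
  define m' where "m' = Mex (DD (Suc n))"
  have mm': "m \<le> m'" unfolding m_def m'_def by (rule mex_mono[OF DD_mono finite_DD]) simp
  have DS: "DD (Suc n) = DD n \<union> {e, m, e + m}" using DD_Suc[of n] As Bs Cs by (auto simp: algebra_simps)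
  have em': "e < m'" unfolding m'_def
  proof (rule mex_gt[OF finite_DD])
    show "0 \<le> e" using e_range m_ge by simp
    fix y assume "0 \<le> y" "y \<le> e"
    then show "y \<in> DD (Suc n)" unfolding DS using m_below e_mid
      by (cases "y < m"; cases "y = m"; cases "y = e") auto
  qed
  have mlt: "m < m'" using em' e_range by simp
  have part1: "\<forall>k\<le>Suc n. 0 \<le> A k \<and> A k \<le> B k \<and> B k \<le> C k \<and> B k - A k < Mex (DD (Suc n)) \<and> C k - B k < Mex (DD (Suc n))"
  proof (intro allI impI)
    fix k assume k: "k \<le> Suc n"
    show "0 \<le> A k \<and> A k \<le> B k \<and> B k \<le> C k \<and> B k - A k < Mex (DD (Suc n)) \<and> C k - B k < Mex (DD (Suc n))"
    proof (cases "k = Suc n")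
      case True
      then show ?thesis using As Bs Cs a_ge e_range m_ge em' mlt unfolding m'_def by simp
    next
      case False
      then have "k \<le> n" using k by simp
      then show ?thesis using P1[of k] mm' unfolding m'_def by fastforce
    qed
  qed
  have part2: "\<forall>k l. k < l \<and> l \<le> Suc n \<longrightarrow> A k < A l \<and> B k < B l \<and> C k + 3 \<le> C l \<and> B k - A k < B l - A l \<and> C k - B k < C l - B l"
  proof (intro allI impI)
    fix k l assume kl: "k < l \<and> l \<le> Suc n"
    show "A k < A l \<and> B k < B l \<and> C k + 3 \<le> C l \<and> B k - A k < B l - A l \<and> C k - B k < C l - B l"
    proof (cases "l = Suc n")
      case True
      then have "k \<le> n" using kl by simp
      then show ?thesis using True P2'[of k] As Bs Cs a_gt bB P1[of n] e_range by auto
    next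
      case False
      then show ?thesis using P2[of k l] kl by simp
    qed
  qed
  show ?thesis unfolding Inv0_def using part1 part2 by blast
qed

lemma Inv0_all: "Inv0 n"
  by (induction n) (auto intro: Inv0_0 Inv0_Suc)

theorem corollary4:
  fixes i j n :: nat
  assumes "i \<in> {1, 2, 3}" and "j \<in> {1, 2, 3}" and "i > j"
  shows "vc i (Suc n) - vc j (Suc n) - (vc i n - vc j n) \<ge> int i - int j"
proof -
  have h: "B n - A n < B (Suc n) - A (Suc n) \<and> C n - B n < C (Suc n) - B (Suc n)"
    using Inv0_all[of "Suc n"] unfolding Inv0_def by auto
  have v1: "\<And>k. vc (Suc 0) k = A k" and v2: "\<And>k. vc 2 k = B k" and v3: "\<And>k. vc 3 k = C k"
    by (simp_all add: vc_def A_def B_def C_def)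
  consider "i = 2" "j = 1" | "i = 3" "j = 1" | "i = 3" "j = 2" using assms by auto
  then show ?thesis using h by cases (simp_all add: v1 v2 v3)
qed

end
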